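(* Let $G$ be a nontrivial finite subgroup of $\mathrm{SO}(3)$. Then there does not exist a continuous function $f:\mathrm{SO}(3)/G\to\mathrm{SO}(3)$ such that $p_G(f(\mathcal{R}))=\mathcal{R}$ for every $\mathcal{R}\in\mathrm{SO}(3)/G$.
   Context: $\mathrm{SO}(3)/G$ denotes the space of left cosets $RG$ ($R\in\mathrm{SO}(3)$) with the quotient topology, and $p_G:\mathrm{SO}(3)\to\mathrm{SO}(3)/G$, $R\mapsto RG$, is the quotient (covering) map. *)

theory Defs
  imports "HOL-Analysis.Analysis"
begin

definition SO3 :: "(real^3^3) set" where
  "SO3 = {Q. rotation_matrix Q}"

definition subgroup_SO3 :: "(real^3^3) set \<Rightarrow> bool" where
  "subgroup_SO3 G \<longleftrightarrow> G \<subseteq> SO3 \<and> mat 1 \<in> G \<and>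
     (\<forall>g\<in>G. \<forall>h\<in>G. g ** h \<in> G) \<and> (\<forall>g\<in>G. matrix_inv g \<in> G)"

definition coset_map :: "(real^3^3) set \<Rightarrow> real^3^3 \<Rightarrow> (real^3^3) set" where
  "coset_map G R = (\<lambda>g. R ** g) ` G"

definition quotient_topology :: "'a topology \<Rightarrow> ('a \<Rightarrow> 'b) \<Rightarrow> 'b topology" where
  "quotient_topology X p =
     topology (\<lambda>U. U \<subseteq> p ` topspace X \<and> openin X {x \<in> topspace X. p x \<in> U})"

end

theory Submission
  imports Defs
begin

definition Hm :: "real^3 \<Rightarrow> real^3^3" where
  "Hm a = mat 1 - (\<chi> i j. 2 * a$i * a$j)"

lemma Hm_mv: "Hm a *v x = x - (2 * (a \<bullet> x)) *\<^sub>R a"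
  by (simp add: Hm_def vec_eq_iff forall_3 matrix_vector_mult_def inner_vec_def sum_3 mat_def
       algebra_simps axis_def)

lemma Hm_fix: "a \<bullet> x = 0 \<Longrightarrow> Hm a *v x = x"
  by (simp add: Hm_mv)

lemma norm1_coords: "norm (a::real^3) = 1 \<Longrightarrow> a$1 * a$1 + a$2 * a$2 + a$3 * a$3 = 1"
proof -
  assume "norm a = 1"
  then have "a \<bullet> a = 1" using norm_eq_1 by blast
  then show ?thesis by (simp add: inner_vec_def sum_3 inner_real_def)
qed

lemma Hm_det: "norm a = 1 \<Longrightarrow> det (Hm a) = -1"
proof -
  assume "norm a = 1"
  then have h: "a$1 * a$1 + a$2 * a$2 + a$3 * a$3 = 1" by (rule norm1_coords)
  show ?thesis
    unfolding det_3 Hm_def using h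
    by (simp add: mat_def) algebra
qed

lemma orth_inner: "orthogonal_matrix Q \<Longrightarrow> (Q *v x) \<bullet> (Q *v y) = x \<bullet> (y::real^'n)"
  using orthogonal_transformation_matrix[of "\<lambda>x. Q *v x"]
  by (simp add: orthogonal_transformation_def)

lemma orth_norm: "orthogonal_matrix Q \<Longrightarrow> norm (Q *v x) = norm (x::real^'n)"
  by (metis orth_inner norm_eq)

lemma Hm_orth: "norm a = 1 \<Longrightarrow> orthogonal_matrix (Hm a)"
proof -
  assume a: "norm a = 1"
  have "orthogonal_transformation (\<lambda>x. Hm a *v x)"
    unfolding orthogonal_transformation
  proof (intro conjI allI)
    show "linear ((*v) (Hm a))" by simp
    fix v
    have "(Hm a *v v) \<bullet> (Hm a *v v) = v \<bullet> v"
      using a by (simp add: Hm_mv inner_diff_left inner_diff_right algebra_simps norm_eq_1[symmetric]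
        inner_commute)
    then show "norm (Hm a *v v) = norm v" by (metis norm_eq)
  qed
  then show ?thesis by (metis orthogonal_transformation_matrix matrix_of_matrix_vector_mul)
qed


lemma step_lemma:
  fixes x y z b :: "real^3"
  assumes "norm x = 1" "norm y = 1" "norm b = 1" "x \<bullet> z = 0" "y \<bullet> z = 0" "b \<bullet> x = 0" "b \<bullet> z = 0"
  shows "\<exists>a b'. norm a = 1 \<and> norm b' = 1 \<and> a \<bullet> z = 0 \<and> b' \<bullet> z = 0 \<and> (Hm a ** Hm b') *v x = y"
proof (cases "x = y")
  case True
  then show ?thesis using assms
    by (intro exI[of _ b]) (simp add: matrix_vector_mul_assoc[symmetric] Hm_fix)
next
  case False
  define a where "a = inverse (norm (x - y)) *\<^sub>R (x - y)"
  have nz: "norm (x - y) \<noteq> 0" using False by simp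
  have na: "norm a = 1" using nz by (simp add: a_def)
  have az: "a \<bullet> z = 0" using assms by (simp add: a_def inner_diff_left)
  have xx: "x \<bullet> x = 1" "y \<bullet> y = 1" using assms(1,2) norm_eq_1 by blast+
  have sq: "norm (x - y) ^ 2 = 2 * ((x - y) \<bullet> x)"
    using xx by (simp add: power2_norm_eq_inner inner_diff_left inner_diff_right inner_commute)
  have "Hm a *v x = y"
  proof -
    have ax: "a \<bullet> x = inverse (norm (x - y)) * ((x - y) \<bullet> x)"
      unfolding a_def by (rule inner_scaleR_left)
    have "2 * (a \<bullet> x) * inverse (norm (x - y)) = 1"
    proof -
      have c: "(x - y) \<bullet> x \<noteq> 0" using sq nz by (auto simp: power2_eq_square)
      show ?thesis
      unfolding ax using sq nz c by (simp add: field_simps power2_eq_square)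
    qed
    then have "(2 * (a \<bullet> x)) *\<^sub>R a = x - y"
      by (simp add: a_def)
    then show ?thesis by (simp add: Hm_mv)
  qed
  then show ?thesis using assms na az
    by (intro exI[of _ a] exI[of _ b]) (simp add: matrix_vector_mul_assoc[symmetric] Hm_fix)
qed

lemma rot_prod: "norm a = 1 \<Longrightarrow> norm b = 1 \<Longrightarrow> rotation_matrix (Hm a ** Hm b)"
  by (simp add: rotation_matrix_def orthogonal_matrix_mul Hm_orth det_mul Hm_det)

lemma orth_tr_mv: "orthogonal_matrix Q \<Longrightarrow> transpose Q *v (Q *v x) = (x::real^'n)"
  by (simp add: matrix_vector_mul_assoc orthogonal_matrix_def)

lemma decomp:
  assumes h: "rotation_matrix h"
  shows "\<exists>a b c d. norm a = 1 \<and> norm b = 1 \<and> norm c = 1 \<and> norm d = 1 \<and>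
           h = Hm a ** Hm b ** (Hm c ** Hm d)"
proof -
  let ?e1 = "axis 1 1 :: real^3" and ?e2 = "axis 2 1 :: real^3" and ?e3 = "axis 3 1 :: real^3"
  have ho: "orthogonal_matrix h" using h by (simp add: rotation_matrix_def)
  obtain a1 b1 where ab1: "norm a1 = 1" "norm b1 = 1" "(Hm a1 ** Hm b1) *v ?e1 = h *v ?e1"
    using step_lemma[of ?e1 "h *v ?e1" ?e2 0] ho by (auto simp: orth_norm inner_axis_axis)
  define r1 where "r1 = Hm a1 ** Hm b1"
  have r1: "rotation_matrix r1" using ab1 by (simp add: r1_def rot_prod)
  have r1o: "orthogonal_matrix r1" using r1 by (simp add: rotation_matrix_def)
  define h1 where "h1 = transpose r1 ** h"
  have h1o: "orthogonal_matrix h1" using ho r1o by (simp add: h1_def orthogonal_matrix_mul)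
  have h1e1: "h1 *v ?e1 = ?e1"
  proof -
    have "h1 *v ?e1 = transpose r1 *v (h *v ?e1)" by (simp add: h1_def matrix_vector_mul_assoc)
    also have "\<dots> = transpose r1 *v (r1 *v ?e1)" using ab1 by (simp add: r1_def)
    also have "\<dots> = ?e1" using r1o by (rule orth_tr_mv)
    finally show ?thesis .
  qed
  have "(h1 *v ?e2) \<bullet> ?e1 = 0"
    using orth_inner[OF h1o, of ?e2 ?e1] h1e1 by (simp add: inner_axis_axis)
  then obtain a2 b2 where ab2: "norm a2 = 1" "norm b2 = 1" "a2 \<bullet> ?e1 = 0" "b2 \<bullet> ?e1 = 0"
     "(Hm a2 ** Hm b2) *v ?e2 = h1 *v ?e2"
    using step_lemma[of ?e2 "h1 *v ?e2" ?e3 ?e1] h1o by (auto simp: orth_norm inner_axis_axis)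
  define r2 where "r2 = Hm a2 ** Hm b2"
  have r2: "rotation_matrix r2" using ab2 by (simp add: r2_def rot_prod)
  have r2o: "orthogonal_matrix r2" using r2 by (simp add: rotation_matrix_def)
  have r2e1: "r2 *v ?e1 = ?e1"
    using ab2 by (simp add: r2_def matrix_vector_mul_assoc[symmetric] Hm_fix inner_commute)
  define h2 where "h2 = transpose r2 ** h1"
  have h2r: "rotation_matrix h2"
    using h r1 r2 by (simp add: h2_def h1_def rotation_matrix_def orthogonal_matrix_mul det_mul)
  have h2e1: "h2 *v ?e1 = ?e1"
  proof -
    have "h2 *v ?e1 = transpose r2 *v (h1 *v ?e1)" by (simp add: h2_def matrix_vector_mul_assoc)
    also have "\<dots> = transpose r2 *v (r2 *v ?e1)" using h1e1 r2e1 by simp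
    also have "\<dots> = ?e1" using r2o by (rule orth_tr_mv)
    finally show ?thesis .
  qed
  have h2e2: "h2 *v ?e2 = ?e2"
  proof -
    have "h2 *v ?e2 = transpose r2 *v (h1 *v ?e2)" by (simp add: h2_def matrix_vector_mul_assoc)
    also have "\<dots> = transpose r2 *v (r2 *v ?e2)" using ab2 by (simp add: r2_def)
    also have "\<dots> = ?e2" using r2o by (rule orth_tr_mv)
    finally show ?thesis .
  qed
  have h2e3: "h2 *v ?e3 = ?e3"
    using cross_rotation_matrix[OF h2r, of ?e1 ?e2] h2e1 h2e2 by (simp add: cross_basis)
  have h2I: "h2 = mat 1"
    using h2e1 h2e2 h2e3
    by (simp add: vec_eq_iff forall_3 matrix_vector_mult_def sum_3 axis_def mat_def)
  have "h = r1 ** (r2 ** h2)"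
    using r1o r2o by (simp add: h2_def h1_def matrix_mul_assoc orthogonal_matrix_def)
  then have "h = r1 ** r2" using h2I by simp
  then show ?thesis using ab1 ab2 by (auto simp: r1_def r2_def)
qed


lemma cont_mm:
  fixes A B :: "'a::topological_space \<Rightarrow> real^'n^'n"
  assumes "continuous_on S A" "continuous_on S B"
  shows "continuous_on S (\<lambda>x. A x ** B x)"
  unfolding matrix_matrix_mult_def
  by (intro continuous_on_vec_lambda continuous_intros assms)

lemma cont_tr:
  fixes A :: "'a::topological_space \<Rightarrow> real^'n^'n"
  assumes "continuous_on S A"
  shows "continuous_on S (\<lambda>x. transpose (A x))"
  unfolding transpose_def
  by (intro continuous_on_vec_lambda continuous_intros assms)

lemma cont_Hm: "continuous_on S (\<lambda>x. Hm (f x))" if "continuous_on S f"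
  unfolding Hm_def
  by (intro continuous_on_vec_lambda continuous_intros that)

lemma SO3_image:
  "SO3 = (\<lambda>((a,b),(c,d)). Hm a ** Hm b ** (Hm c ** Hm d)) `
     ((sphere 0 1 \<times> sphere 0 1) \<times> (sphere 0 1 \<times> sphere 0 1))"
proof (rule subset_antisym)
  show "SO3 \<subseteq> (\<lambda>((a,b),(c,d)). Hm a ** Hm b ** (Hm c ** Hm d)) `
     ((sphere 0 1 \<times> sphere 0 1) \<times> (sphere 0 1 \<times> sphere 0 1))"
  proof
    fix h assume "h \<in> SO3"
    then obtain a b c d where "norm a = 1" "norm b = 1" "norm c = 1" "norm d = 1"
      "h = Hm a ** Hm b ** (Hm c ** Hm d)"
      using decomp by (metis SO3_def mem_Collect_eq)
    then show "h \<in> (\<lambda>((a,b),(c,d)). Hm a ** Hm b ** (Hm c ** Hm d)) `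
     ((sphere 0 1 \<times> sphere 0 1) \<times> (sphere 0 1 \<times> sphere 0 1))"
      by (force simp: image_iff)
  qed
next
  show "(\<lambda>((a,b),(c,d)). Hm a ** Hm b ** (Hm c ** Hm d)) `
     ((sphere 0 1 \<times> sphere 0 1) \<times> (sphere 0 1 \<times> sphere 0 1)) \<subseteq> SO3"
    by (auto simp: SO3_def rotation_matrix_def orthogonal_matrix_mul Hm_orth det_mul Hm_det)
qed

lemma SO3_connected: "connected SO3"
proof -
  have "connected (sphere (0::real^3) 1)" by (rule connected_sphere) simp
  then have c: "connected ((sphere (0::real^3) 1 \<times> sphere (0::real^3) 1) \<times> (sphere (0::real^3) 1 \<times> sphere (0::real^3) 1))"
    using connected_Times by metis
  have "continuous_on ((sphere (0::real^3) 1 \<times> sphere 0 1) \<times> (sphere 0 1 \<times> sphere 0 1))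
         (\<lambda>((a,b),(c,d)). Hm a ** Hm b ** (Hm c ** Hm d))"
    unfolding case_prod_beta
    by (intro cont_mm cont_Hm continuous_intros)
  then show ?thesis
    by (subst SO3_image) (rule connected_continuous_image[OF _ c])
qed


lemma quot_open:
  "openin (quotient_topology X p) U \<longleftrightarrow>
     U \<subseteq> p ` topspace X \<and> openin X {x \<in> topspace X. p x \<in> U}"
proof -
  define L where "L = (\<lambda>U. U \<subseteq> p ` topspace X \<and> openin X {x \<in> topspace X. p x \<in> U})"
  have i1: "L (S \<inter> T)" if "L S" "L T" for S T
  proof -
    have "{x \<in> topspace X. p x \<in> S \<inter> T} =
        {x \<in> topspace X. p x \<in> S} \<inter> {x \<in> topspace X. p x \<in> T}" by auto
    then show ?thesis using that by (auto simp: L_def)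
  qed
  have i2: "L (\<Union>K)" if K: "\<forall>S\<in>K. L S" for K
  proof -
    have "{x \<in> topspace X. p x \<in> \<Union>K} = \<Union>((\<lambda>S. {x \<in> topspace X. p x \<in> S}) ` K)" by auto
    then show ?thesis using K by (auto simp: L_def)
  qed
  have "istopology L" unfolding istopology_def using i1 i2 by blast
  then show ?thesis
    unfolding quotient_topology_def L_def[symmetric] by (simp add: topology_inverse' L_def)
qed

lemma quot_cont: "continuous_map X (quotient_topology X p) p"
  unfolding continuous_map_def
proof (intro conjI allI impI)
  have e: "{x \<in> topspace X. p x \<in> p ` topspace X} = topspace X" by auto
  have "openin (quotient_topology X p) (p ` topspace X)"
    by (simp add: quot_open e)
  then have "p ` topspace X \<subseteq> topspace (quotient_topology X p)"
    by (rule openin_subset)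
  then show "p \<in> topspace X \<rightarrow> topspace (quotient_topology X p)" by auto
next
  fix U assume "openin (quotient_topology X p) U"
  then show "openin X {x \<in> topspace X. p x \<in> U}" by (simp add: quot_open)
qed

theorem theorem9:
  fixes G :: "(real^3^3) set"
  assumes "subgroup_SO3 G" and "finite G" and "G \<noteq> {mat 1}"
  shows "\<not> (\<exists>f. continuous_map (quotient_topology (top_of_set SO3) (coset_map G))
                                (top_of_set SO3) f
             \<and> (\<forall>C \<in> coset_map G ` SO3. coset_map G (f C) = C))"
proof
  assume "\<exists>f. continuous_map (quotient_topology (top_of_set SO3) (coset_map G))
                                (top_of_set SO3) f
             \<and> (\<forall>C \<in> coset_map G ` SO3. coset_map G (f C) = C)"
  then obtain f where fc: "continuous_map (quotient_topology (top_of_set SO3) (coset_map G))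
                                (top_of_set SO3) f"
      and fs: "\<forall>C \<in> coset_map G ` SO3. coset_map G (f C) = C" by blast
  let ?p = "coset_map G"
  define s where "s = f \<circ> ?p"
  have GS: "G \<subseteq> SO3" and G1: "mat 1 \<in> G" and Gm: "\<forall>g\<in>G. \<forall>h\<in>G. g ** h \<in> G"
    and Gi: "\<forall>g\<in>G. matrix_inv g \<in> G"
    using assms(1) by (auto simp: subgroup_SO3_def)
  have "continuous_map (top_of_set SO3) (top_of_set SO3) s"
    unfolding s_def by (rule continuous_map_compose[OF quot_cont fc])
  then have sc: "continuous_on SO3 s" and sS: "s ` SO3 \<subseteq> SO3"
    by auto
  have orth: "orthogonal_matrix R" if "R \<in> SO3" for R
    using that by (simp add: SO3_def rotation_matrix_def)
  have sp: "?p (s R) = ?p R" if "R \<in> SO3" for R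
    using fs that by (simp add: s_def)
  define \<gamma> where "\<gamma> R = transpose R ** s R" for R
  have \<gamma>G: "\<gamma> R \<in> G" if R: "R \<in> SO3" for R
  proof -
    have "s R \<in> ?p (s R)" using G1 by (force simp: coset_map_def)
    then have "s R \<in> ?p R" using sp[OF R] by simp
    then obtain g where g: "g \<in> G" "s R = R ** g" by (auto simp: coset_map_def)
    have "\<gamma> R = (transpose R ** R) ** g" by (simp add: \<gamma>_def g matrix_mul_assoc)
    also have "\<dots> = g" using orth[OF R] by (simp add: orthogonal_matrix_def)
    finally show ?thesis using g by simp
  qed
  have \<gamma>c: "continuous_on SO3 \<gamma>"
    unfolding \<gamma>_def by (intro cont_mm cont_tr sc continuous_on_id)
  have cc: "connected_component_set G y = {y}" if y: "y \<in> G" for y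
  proof -
    have "finite (connected_component_set G y)"
      using assms(2) connected_component_subset finite_subset by blast
    then obtain a where "connected_component_set G y = {a}"
      using connected_finite_iff_sing[OF connected_connected_component] y
      by (metis connected_component_refl_eq empty_iff mem_Collect_eq)
    then show ?thesis using y by (metis connected_component_refl_eq mem_Collect_eq singletonD)
  qed
  have "\<gamma> constant_on SO3"
    by (rule continuous_disconnected_range_constant[OF SO3_connected \<gamma>c, of G])
       (use \<gamma>G cc in auto)
  then obtain g0 where g0: "\<And>R. R \<in> SO3 \<Longrightarrow> \<gamma> R = g0"
    unfolding constant_on_def by blast
  have sR: "s R = R ** g0" if R: "R \<in> SO3" for R
  proof -
    have "s R = (R ** transpose R) ** s R" using orth[OF R] by (simp add: orthogonal_matrix_def)
    also have "\<dots> = R ** \<gamma> R" by (simp add: \<gamma>_def matrix_mul_assoc)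
    finally show ?thesis using g0[OF R] by simp
  qed
  obtain h where h: "h \<in> G" "h \<noteq> mat 1" using assms(3) G1 by blast
  have hS: "h \<in> SO3" and IS: "mat 1 \<in> SO3" using h G1 GS by auto
  have hinv: "h ** matrix_inv h = mat 1"
  proof -
    have "h ** transpose h = mat 1 \<and> transpose h ** h = mat 1"
      using orth[OF hS] by (simp add: orthogonal_matrix_def)
    then show ?thesis unfolding matrix_inv_def by (rule someI2) simp
  qed
  have pI: "?p (mat 1) = G" by (simp add: coset_map_def)
  have ph: "?p h = G"
  proof
    show "?p h \<subseteq> G" using Gm h by (auto simp: coset_map_def)
  next
    show "G \<subseteq> ?p h"
    proof
      fix g assume g: "g \<in> G"
      have "matrix_inv h ** g \<in> G" using Gm Gi h g by blast
      moreover have "g = h ** (matrix_inv h ** g)" by (metis matrix_mul_assoc hinv matrix_mul_lid)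
      ultimately show "g \<in> ?p h" unfolding coset_map_def by blast
    qed
  qed
  have "s h = s (mat 1)" by (simp add: s_def ph pI)
  then have "h ** g0 = g0" using sR[OF hS] sR[OF IS] by simp
  moreover have g0S: "g0 \<in> SO3" using \<gamma>G[OF IS] g0[OF IS] GS by auto
  ultimately have "h ** (g0 ** transpose g0) = g0 ** transpose g0"
    by (simp add: matrix_mul_assoc)
  then have "h = mat 1" using orth[OF g0S] by (simp add: orthogonal_matrix_def)
  then show False using h by simp
qed

end
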